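(* Let $m>1$ and $n_1,\ldots,n_m>1$. Then the cone $\mathscr{P}_{\mathbb{C}}^{[n_1,\ldots,n_m]}$ is proper, while the cone $\mathscr{P}_{\mathbb{R}}^{[n_1,\ldots,n_m]}$ is solid but not pointed.
   Context: $\mathbb{C}^{[n_1,\ldots,n_m]}$ is the real vector space of tensors $\mathcal{H}\in\mathbb{C}^{n_1\times\cdots\times n_m\times n_1\times\cdots\times n_m}$ with $\mathcal{H}_{i_1\ldots i_m j_1\ldots j_m}=\overline{\mathcal{H}_{j_1\ldots j_m i_1\ldots i_m}}$; $\mathbb{R}^{[n_1,\ldots,n_m]}$ is its subset of real tensors. For $\mathbb{F}\in\{\mathbb{R},\mathbb{C}\}$, $\mathscr{P}_{\mathbb{F}}^{[n_1,\ldots,n_m]}:=\{\mathcal{H}\in\mathbb{F}^{[n_1,\ldots,n_m]}:\langle\mathcal{H},x_1\otimes\cdots\otimes x_m\otimes\overline{x_1}\otimes\cdots\otimes\overline{x_m}\rangle\ge0\ \forall x_i\in\mathbb{F}^{n_i}\}$, where $\langle\mathcal{A},\mathcal{B}\rangle=\sum\mathcal{A}_{\cdot}\overline{\mathcal{B}_{\cdot}}$. A closed convex cone in the real vector space $\mathbb{F}^{[n_1,\ldots,n_m]}$ is solid if it has nonempty interior, pointed if it contains no line through the origin, and proper if it is both. *)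

theory Defs
  imports Complex_Main
begin

text \<open>Dimensions are given by a list ns = [n_1,...,n_m] (so m = length ns).
  A tensor in C^{n_1 x ... x n_m x n_1 x ... x n_m} is represented as a function
  H :: nat list => nat list => complex, where H i j is the entry
  H_{i_1..i_m j_1..j_m}; entries outside the index range are required to be 0.
  A vector x_k in F^{n_k} is represented by x k :: nat => complex.\<close>

type_synonym tensor = "nat list \<Rightarrow> nat list \<Rightarrow> complex"

definition idx :: "nat list \<Rightarrow> nat list set" where
  "idx ns = {is. length is = length ns \<and> (\<forall>k<length ns. is ! k < ns ! k)}"

definition herm_C :: "nat list \<Rightarrow> tensor set" where
  "herm_C ns = {H. (\<forall>i j. (i \<notin> idx ns \<or> j \<notin> idx ns) \<longrightarrow> H i j = 0)
                 \<and> (\<forall>i j. H i j = cnj (H j i))}"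

definition herm_R :: "nat list \<Rightarrow> tensor set" where
  "herm_R ns = {H \<in> herm_C ns. \<forall>i j. H i j \<in> \<real>}"

definition tinner :: "nat list \<Rightarrow> tensor \<Rightarrow> tensor \<Rightarrow> complex" where
  "tinner ns A B = (\<Sum>i\<in>idx ns. \<Sum>j\<in>idx ns. A i j * cnj (B i j))"

definition rank1 :: "nat list \<Rightarrow> (nat \<Rightarrow> nat \<Rightarrow> complex) \<Rightarrow> tensor" where
  "rank1 ns x = (\<lambda>i j. if i \<in> idx ns \<and> j \<in> idx ns
      then (\<Prod>k<length ns. x k (i ! k)) * (\<Prod>k<length ns. cnj (x k (j ! k))) else 0)"

definition nonneg_c :: "complex \<Rightarrow> bool" where
  "nonneg_c z \<longleftrightarrow> Im z = 0 \<and> Re z \<ge> 0"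

definition PSD_C :: "nat list \<Rightarrow> tensor set" where
  "PSD_C ns = {H \<in> herm_C ns. \<forall>x. nonneg_c (tinner ns H (rank1 ns x))}"

definition PSD_R :: "nat list \<Rightarrow> tensor set" where
  "PSD_R ns = {H \<in> herm_R ns. \<forall>x. (\<forall>k l. x k l \<in> \<real>) \<longrightarrow> nonneg_c (tinner ns H (rank1 ns x))}"

text \<open>Cone notions relative to the ambient real vector space V (with entrywise topology
  on the finitely many coordinates).\<close>
definition closed_convex_cone :: "nat list \<Rightarrow> tensor set \<Rightarrow> tensor set \<Rightarrow> bool" where
  "closed_convex_cone ns V C \<longleftrightarrow> C \<subseteq> V \<and> C \<noteq> {}
     \<and> (\<forall>H\<in>C. \<forall>t::real. t \<ge> 0 \<longrightarrow> (\<lambda>i j. of_real t * H i j) \<in> C)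
     \<and> (\<forall>H\<in>C. \<forall>G\<in>C. \<forall>u::real. 0 \<le> u \<and> u \<le> 1 \<longrightarrow>
           (\<lambda>i j. of_real u * H i j + of_real (1 - u) * G i j) \<in> C)
     \<and> (\<forall>S H. (\<forall>k. S k \<in> C) \<and> H \<in> V \<and> (\<forall>i j. (\<lambda>k. S k i j) \<longlonglongrightarrow> H i j) \<longrightarrow> H \<in> C)"

definition solid_cone :: "nat list \<Rightarrow> tensor set \<Rightarrow> tensor set \<Rightarrow> bool" where
  "solid_cone ns V C \<longleftrightarrow> (\<exists>H\<in>C. \<exists>e>0. \<forall>G\<in>V.
      (\<forall>i\<in>idx ns. \<forall>j\<in>idx ns. cmod (G i j - H i j) < e) \<longrightarrow> G \<in> C)"

definition pointed_cone :: "tensor set \<Rightarrow> bool" where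
  "pointed_cone C \<longleftrightarrow> \<not> (\<exists>H. H \<noteq> (\<lambda>i j. 0) \<and> (\<forall>t::real. (\<lambda>i j. of_real t * H i j) \<in> C))"

definition proper_cone :: "nat list \<Rightarrow> tensor set \<Rightarrow> tensor set \<Rightarrow> bool" where
  "proper_cone ns V C \<longleftrightarrow> closed_convex_cone ns V C \<and> solid_cone ns V C \<and> pointed_cone C"

end

theory Submission
  imports Defs
begin


definition pr :: "nat list \<Rightarrow> (nat \<Rightarrow> nat \<Rightarrow> complex) \<Rightarrow> nat list \<Rightarrow> complex" where
  "pr ns x i = (\<Prod>k<length ns. x k (i ! k))"

lemma idx_Nil: "idx [] = {[]}" by (auto simp: idx_def)

lemma all_less_Suc_shift: "(\<forall>k<Suc m. P k) = (P 0 \<and> (\<forall>k<m. P (Suc k)))"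
  by (auto simp: less_Suc_eq_0_disj)

lemma idx_Cons: "idx (n # ns) = (\<lambda>(a, js). a # js) ` ({..<n} \<times> idx ns)"
proof (rule set_eqI)
  fix xs show "xs \<in> idx (n # ns) \<longleftrightarrow> xs \<in> (\<lambda>(a, js). a # js) ` ({..<n} \<times> idx ns)"
  proof (cases xs)
    case Nil then show ?thesis by (auto simp: idx_def)
  next
    case (Cons a js)
    have "a # js \<in> idx (n # ns) \<longleftrightarrow> a < n \<and> js \<in> idx ns"
      by (auto simp: idx_def all_less_Suc_shift)
    then show ?thesis using Cons by auto
  qed
qed

lemma finite_idx: "finite (idx ns)"
  by (induction ns) (auto simp: idx_Nil idx_Cons)

lemma sum_idx_Cons: "(\<Sum>i\<in>idx (n # ns). f i) = (\<Sum>a<n. \<Sum>i\<in>idx ns. f (a # i))"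
proof -
  have inj: "inj_on (\<lambda>(a, js). a # js) ({..<n} \<times> idx ns)" by (auto simp: inj_on_def)
  have "(\<Sum>i\<in>idx (n # ns). f i) = (\<Sum>p\<in>{..<n} \<times> idx ns. f (fst p # snd p))"
    unfolding idx_Cons by (subst sum.reindex[OF inj]) (auto intro!: sum.cong)
  also have "\<dots> = (\<Sum>a<n. \<Sum>i\<in>idx ns. f (a # i))"
    by (subst sum.cartesian_product') simp
  finally show ?thesis .
qed

lemma pr_Cons: "pr (n # ns) x (a # i) = x 0 a * pr ns (\<lambda>k. x (Suc k)) i"
  unfolding pr_def length_Cons prod.lessThan_Suc_shift by simp

lemma tinner_rank1: "tinner ns H (rank1 ns x) = (\<Sum>i\<in>idx ns. \<Sum>j\<in>idx ns. H i j * cnj (pr ns x i) * pr ns x j)"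
  unfolding tinner_def rank1_def pr_def
  by (intro sum.cong refl) (simp add: mult.assoc)

lemma sum_delta_mult: "(a::nat) < n \<Longrightarrow> (\<Sum>l<n. (if l = a then p else 0) * g l) = p * (g a :: complex)"
proof -
  assume a: "a < n"
  have "(\<Sum>l<n. (if l = a then p else 0) * g l) = (\<Sum>l<n. if l = a then p * g a else 0)"
    by (intro sum.cong) auto
  also have "\<dots> = p * g a" using a by (subst sum.delta) auto
  finally show ?thesis .
qed

lemma sum_delta_mult2: "(a::nat) < n \<Longrightarrow> (\<Sum>l<n. g l * (if l = a then p else 0)) = p * (g a :: complex)"
  using sum_delta_mult[of a n p g] by (simp add: mult.commute)

lemma polar4:
  fixes c :: "nat \<Rightarrow> nat \<Rightarrow> complex"
  assumes "a < n" "b < n" "a \<noteq> b"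
  shows "(\<Sum>l<n. \<Sum>l'<n. cnj ((if l = a then p else 0) + (if l = b then q else 0)) *
            ((if l' = a then p else 0) + (if l' = b then q else 0)) * c l l')
     = cnj p * p * c a a + cnj p * q * c a b + cnj q * p * c b a + cnj q * q * c b b"
proof -
  have e: "cnj ((if l = a then p else 0) + (if l = b then q else 0)) = (if l = a then cnj p else 0) + (if l = b then cnj q else 0)" for l
    by simp
  have "(\<Sum>l<n. \<Sum>l'<n. cnj ((if l = a then p else 0) + (if l = b then q else 0)) *
            ((if l' = a then p else 0) + (if l' = b then q else 0)) * c l l')
     = (\<Sum>l<n. ((if l = a then cnj p else 0) + (if l = b then cnj q else 0)) * 
          (\<Sum>l'<n. ((if l' = a then p else 0) + (if l' = b then q else 0)) * c l l'))"
    unfolding e by (simp add: sum_distrib_left mult.assoc)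
  also have "\<dots> = cnj p * p * c a a + cnj p * q * c a b + cnj q * p * c b a + cnj q * q * c b b"
    using assms by (simp add: distrib_right sum.distrib sum_delta_mult sum_delta_mult2 ring_distribs sum_distrib_left[symmetric] algebra_simps)
  finally show ?thesis .
qed

lemma polar1:
  fixes c :: "nat \<Rightarrow> nat \<Rightarrow> complex"
  assumes "a < n"
  shows "(\<Sum>l<n. \<Sum>l'<n. cnj (if l = a then p else 0) * (if l' = a then p else 0) * c l l')
     = cnj p * p * c a a"
proof -
  have e: "cnj (if l = a then p else 0) = (if l = a then cnj p else 0)" for l
    by simp
  have "(\<Sum>l<n. \<Sum>l'<n. cnj (if l = a then p else 0) * (if l' = a then p else 0) * c l l')
     = (\<Sum>l<n. (if l = a then cnj p else 0) * (\<Sum>l'<n. (if l' = a then p else 0) * c l l'))"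
    unfolding e by (simp add: sum_distrib_left mult.assoc)
  also have "\<dots> = (\<Sum>l<n. (if l = a then cnj p else 0) * (p * c l a))"
    using assms by (simp add: sum_delta_mult)
  also have "\<dots> = cnj p * p * c a a"
    using assms by (simp add: sum_delta_mult)
  finally show ?thesis .
qed



lemma polar_zero:
  fixes c :: "nat \<Rightarrow> nat \<Rightarrow> complex"
  assumes h: "\<forall>u. (\<Sum>l<n. \<Sum>l'<n. cnj (u l) * u l' * c l l') = 0" and ab: "a < n" "b < n"
  shows "c a b = 0"
proof (cases "a = b")
  case True
  have "(\<Sum>l<n. \<Sum>l'<n. cnj (if l = a then 1 else 0) * (if l' = a then 1 else 0) * c l l') = 0"
    by (rule h[rule_format])
  then show ?thesis using polar1[OF ab(1), of 1 c] True by simp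
next
  case False
  define u where "u p q = (\<lambda>l. (if l = a then p else 0) + (if l = b then q else 0))" for p q :: complex
  have g: "cnj p * p * c a a + cnj p * q * c a b + cnj q * p * c b a + cnj q * q * c b b = 0" for p q
  proof -
    have "(\<Sum>l<n. \<Sum>l'<n. cnj (u p q l) * u p q l' * c l l') = 0" by (rule h[rule_format])
    then show ?thesis using polar4[OF ab False, of p q c] unfolding u_def by (simp only:)
  qed
  have 1: "c a a = 0" using g[of 1 0] by simp
  have 2: "c b b = 0" using g[of 0 1] by simp
  have 3: "c a b + c b a = 0" using g[of 1 1] 1 2 by simp
  have 4: "\<i> * c a b - \<i> * c b a = 0" using g[of 1 \<i>] 1 2 by (simp add: algebra_simps)
  have 5: "\<i> * (c a b - c b a) = 0" using 4 by (simp add: right_diff_distrib)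
  have 6: "c a b = c b a" using 5 by simp
  have "c a b + c a b = 0" using 3 unfolding 6[symmetric] .
  then have "2 * c a b = 0" by (simp only: mult_2)
  then show ?thesis by simp
qed



abbreviation Q :: "nat list \<Rightarrow> tensor \<Rightarrow> (nat \<Rightarrow> nat \<Rightarrow> complex) \<Rightarrow> complex" where
  "Q ns H x \<equiv> (\<Sum>i\<in>idx ns. \<Sum>j\<in>idx ns. H i j * cnj (pr ns x i) * pr ns x j)"

lemma Q_Cons: "Q (n # ns) H x = (\<Sum>a<n. \<Sum>b<n. cnj (x 0 a) * x 0 b *
    Q ns (\<lambda>i j. H (a # i) (b # j)) (\<lambda>k. x (Suc k)))"
proof -
  have "Q (n # ns) H x = (\<Sum>a<n. \<Sum>i\<in>idx ns. \<Sum>b<n. \<Sum>j\<in>idx ns.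
      cnj (x 0 a) * x 0 b * (H (a # i) (b # j) * cnj (pr ns (\<lambda>k. x (Suc k)) i) * pr ns (\<lambda>k. x (Suc k)) j))"
    by (simp add: sum_idx_Cons pr_Cons mult_ac)
  also have "\<dots> = (\<Sum>a<n. \<Sum>b<n. \<Sum>i\<in>idx ns. \<Sum>j\<in>idx ns.
      cnj (x 0 a) * x 0 b * (H (a # i) (b # j) * cnj (pr ns (\<lambda>k. x (Suc k)) i) * pr ns (\<lambda>k. x (Suc k)) j))"
    by (intro sum.cong refl) (rule sum.swap)
  also have "\<dots> = (\<Sum>a<n. \<Sum>b<n. cnj (x 0 a) * x 0 b *
    Q ns (\<lambda>i j. H (a # i) (b # j)) (\<lambda>k. x (Suc k)))"
    by (simp add: sum_distrib_left)
  finally show ?thesis .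
qed

lemma zero_form:
  "(\<forall>x. Q ns H x = 0) \<Longrightarrow> i \<in> idx ns \<Longrightarrow> j \<in> idx ns \<Longrightarrow> H i j = 0"
proof (induction ns arbitrary: H i j)
  case Nil
  then have "Q [] H x = H [] []" for x by (simp add: idx_Nil pr_def)
  with Nil show ?case by (simp add: idx_Nil pr_def)
next
  case (Cons n ns)
  from Cons.prems(2) obtain a i' where i: "i = a # i'" "a < n" "i' \<in> idx ns"
    unfolding idx_Cons by auto
  from Cons.prems(3) obtain b j' where j: "j = b # j'" "b < n" "j' \<in> idx ns"
    unfolding idx_Cons by auto
  have "\<forall>y. Q ns (\<lambda>i j. H (a # i) (b # j)) y = 0"
  proof
    fix y
    define c where "c a b = Q ns (\<lambda>i j. H (a # i) (b # j)) y" for a b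
    have "\<forall>u. (\<Sum>l<n. \<Sum>l'<n. cnj (u l) * u l' * c l l') = 0"
    proof
      fix u
      define x where "x k = (case k of 0 \<Rightarrow> u | Suc k' \<Rightarrow> y k')" for k
      have "Q (n # ns) H x = 0" using Cons.prems(1) by blast
      moreover have "(\<lambda>k. x (Suc k)) = y" "x 0 = u" by (auto simp: x_def)
      ultimately show "(\<Sum>l<n. \<Sum>l'<n. cnj (u l) * u l' * c l l') = 0"
        unfolding Q_Cons c_def by simp
    qed
    from polar_zero[OF this i(2) j(2)] show "Q ns (\<lambda>i j. H (a # i) (b # j)) y = 0"
      unfolding c_def .
  qed
  from Cons.IH[OF this i(3) j(3)] show ?case using i j by simp
qed



definition PS :: "nat list \<Rightarrow> tensor set \<Rightarrow> ((nat \<Rightarrow> nat \<Rightarrow> complex) \<Rightarrow> bool) \<Rightarrow> tensor set" where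
  "PS ns V R = {H \<in> V. \<forall>x. R x \<longrightarrow> nonneg_c (tinner ns H (rank1 ns x))}"

lemma PSD_C_PS: "PSD_C ns = PS ns (herm_C ns) (\<lambda>_. True)"
  by (simp add: PSD_C_def PS_def)

lemma PSD_R_PS: "PSD_R ns = PS ns (herm_R ns) (\<lambda>x. \<forall>k l. x k l \<in> \<real>)"
  by (simp add: PSD_R_def PS_def)

lemma tinner_scale: "tinner ns (\<lambda>i j. of_real t * H i j) B = of_real t * tinner ns H B"
  by (simp add: tinner_def sum_distrib_left mult.assoc)

lemma tinner_add: "tinner ns (\<lambda>i j. A i j + C i j) B = tinner ns A B + tinner ns C B"
  by (simp add: tinner_def sum.distrib ring_distribs)

lemma nonneg_scale: "nonneg_c a \<Longrightarrow> t \<ge> 0 \<Longrightarrow> nonneg_c (of_real t * a)"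
  by (simp add: nonneg_c_def)

lemma nonneg_add: "nonneg_c a \<Longrightarrow> nonneg_c b \<Longrightarrow> nonneg_c (a + b)"
  by (simp add: nonneg_c_def)

lemma herm_C_iff: "H \<in> herm_C ns \<longleftrightarrow> (\<forall>i j. (i \<notin> idx ns \<or> j \<notin> idx ns) \<longrightarrow> H i j = 0)
   \<and> (\<forall>i j. cnj (H i j) = H j i)"
  unfolding herm_C_def mem_Collect_eq
  by (metis complex_cnj_cnj)

lemma herm_C_scale: "H \<in> herm_C ns \<Longrightarrow> (\<lambda>i j. of_real t * H i j) \<in> herm_C ns"
  unfolding herm_C_iff by simp

lemma herm_C_add: "H \<in> herm_C ns \<Longrightarrow> G \<in> herm_C ns \<Longrightarrow> (\<lambda>i j. H i j + G i j) \<in> herm_C ns"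
  unfolding herm_C_iff by simp

lemma herm_R_scale: "H \<in> herm_R ns \<Longrightarrow> (\<lambda>i j. of_real t * H i j) \<in> herm_R ns"
  unfolding herm_R_def using herm_C_scale by auto

lemma herm_R_add: "H \<in> herm_R ns \<Longrightarrow> G \<in> herm_R ns \<Longrightarrow> (\<lambda>i j. H i j + G i j) \<in> herm_R ns"
  unfolding herm_R_def using herm_C_add by auto

lemma zero_herm_R: "(\<lambda>i j. 0) \<in> herm_R ns"
  by (simp add: herm_R_def herm_C_iff)

lemma herm_R_sub: "herm_R ns \<subseteq> herm_C ns"
  by (auto simp: herm_R_def)

lemma cone_PS:
  assumes sc: "\<And>H t. H \<in> V \<Longrightarrow> (\<lambda>i j. of_real t * H i j) \<in> V"
    and ad: "\<And>H G. H \<in> V \<Longrightarrow> G \<in> V \<Longrightarrow> (\<lambda>i j. H i j + G i j) \<in> V"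
    and z: "(\<lambda>i j. 0) \<in> V"
  shows "closed_convex_cone ns V (PS ns V R)"
  unfolding closed_convex_cone_def
proof (intro conjI ballI allI impI)
  show "PS ns V R \<subseteq> V" by (auto simp: PS_def)
  have "tinner ns (\<lambda>i j. 0) B = 0" for B by (simp add: tinner_def)
  then have "(\<lambda>i j. 0) \<in> PS ns V R" using z by (simp add: PS_def nonneg_c_def)
  then show "PS ns V R \<noteq> {}" by blast
next
  fix H and t :: real assume H: "H \<in> PS ns V R" and t: "0 \<le> t"
  then show "(\<lambda>i j. of_real t * H i j) \<in> PS ns V R"
    by (auto simp: PS_def tinner_scale sc nonneg_scale)
next
  fix H G and u :: real assume H: "H \<in> PS ns V R" and G: "G \<in> PS ns V R" and u: "0 \<le> u \<and> u \<le> 1"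
  have "(\<lambda>i j. of_real u * H i j + of_real (1 - u) * G i j) \<in> V"
    using H G by (intro ad sc) (auto simp: PS_def)
  moreover have "nonneg_c (tinner ns (\<lambda>i j. of_real u * H i j + of_real (1 - u) * G i j) (rank1 ns x))"
    if "R x" for x
  proof -
    have "tinner ns (\<lambda>i j. of_real u * H i j + of_real (1 - u) * G i j) (rank1 ns x)
      = of_real u * tinner ns H (rank1 ns x) + of_real (1 - u) * tinner ns G (rank1 ns x)"
      unfolding tinner_add[of ns "\<lambda>i j. of_real u * H i j" "\<lambda>i j. of_real (1 - u) * G i j"]
      unfolding tinner_scale ..
    moreover have "nonneg_c (tinner ns H (rank1 ns x))" "nonneg_c (tinner ns G (rank1 ns x))"
      using H G that by (auto simp: PS_def)
    ultimately show ?thesis using u by (simp only:) (intro nonneg_add nonneg_scale, auto)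
  qed
  ultimately show "(\<lambda>i j. of_real u * H i j + of_real (1 - u) * G i j) \<in> PS ns V R"
    unfolding PS_def by blast
next
  fix S H assume a: "(\<forall>k. S k \<in> PS ns V R) \<and> H \<in> V \<and> (\<forall>i j. (\<lambda>k. S k i j) \<longlonglongrightarrow> H i j)"
  have "nonneg_c (tinner ns H (rank1 ns x))" if "R x" for x
  proof -
    have conv: "\<And>i j. (\<lambda>k. S k i j) \<longlonglongrightarrow> H i j" using a by blast
    have lim: "(\<lambda>k. tinner ns (S k) (rank1 ns x)) \<longlonglongrightarrow> tinner ns H (rank1 ns x)"
      unfolding tinner_def by (intro tendsto_sum tendsto_mult conv tendsto_const)
    have nn: "nonneg_c (tinner ns (S k) (rank1 ns x))" for k
      using a that by (auto simp: PS_def)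
    have limI: "(\<lambda>k. Im (tinner ns (S k) (rank1 ns x))) \<longlonglongrightarrow> Im (tinner ns H (rank1 ns x))"
      by (rule tendsto_Im[OF lim])
    have eqI: "(\<lambda>k. Im (tinner ns (S k) (rank1 ns x))) = (\<lambda>k. 0)"
      using nn by (simp add: nonneg_c_def)
    have "(\<lambda>k. 0::real) \<longlonglongrightarrow> Im (tinner ns H (rank1 ns x))"
      using limI unfolding eqI .
    then have 1: "Im (tinner ns H (rank1 ns x)) = 0"
      by (simp add: LIMSEQ_const_iff)
    have "(\<lambda>k. Re (tinner ns (S k) (rank1 ns x))) \<longlonglongrightarrow> Re (tinner ns H (rank1 ns x))"
      by (rule tendsto_Re[OF lim])
    then have 2: "Re (tinner ns H (rank1 ns x)) \<ge> 0"
      by (rule LIMSEQ_le_const) (use nn in \<open>auto simp: nonneg_c_def\<close>)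
    from 1 2 show ?thesis by (simp add: nonneg_c_def)
  qed
  then show "H \<in> PS ns V R" using a unfolding PS_def by blast
qed

lemma ccc_C: "closed_convex_cone ns (herm_C ns) (PSD_C ns)"
  unfolding PSD_C_PS
  by (rule cone_PS[OF herm_C_scale herm_C_add]) (simp_all add: herm_C_iff)

lemma ccc_R: "closed_convex_cone ns (herm_R ns) (PSD_R ns)"
  unfolding PSD_R_PS
  by (rule cone_PS[OF herm_R_scale herm_R_add zero_herm_R])



definition Iden :: "nat list \<Rightarrow> tensor" where
  "Iden ns = (\<lambda>i j. if i \<in> idx ns \<and> j = i then 1 else 0)"

lemma Iden_herm_R: "Iden ns \<in> herm_R ns"
  unfolding herm_R_def herm_C_iff Iden_def by auto

lemma Q_real:
  assumes "G \<in> herm_C ns"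
  shows "Im (Q ns G x) = 0"
proof -
  have h: "cnj (G i j) = G j i" for i j using assms unfolding herm_C_iff by blast
  have "cnj (Q ns G x) = (\<Sum>i\<in>idx ns. \<Sum>j\<in>idx ns. G j i * cnj (pr ns x j) * pr ns x i)"
    by (simp add: h mult_ac)
  also have "\<dots> = Q ns G x" by (rule sum.swap)
  finally have "cnj (Q ns G x) = Q ns G x" .
  then show ?thesis using Reals_cnj_iff complex_is_Real_iff by blast
qed

lemma Q_Iden: "Q ns (Iden ns) x = of_real (\<Sum>i\<in>idx ns. (cmod (pr ns x i))\<^sup>2)"
proof -
  have "Q ns (Iden ns) x = (\<Sum>i\<in>idx ns. cnj (pr ns x i) * pr ns x i)"
  proof (rule sum.cong[OF refl])
    fix i assume i: "i \<in> idx ns"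
    have "(\<Sum>j\<in>idx ns. Iden ns i j * cnj (pr ns x i) * pr ns x j)
        = (\<Sum>j\<in>idx ns. if j = i then cnj (pr ns x i) * pr ns x i else 0)"
      by (rule sum.cong) (auto simp: Iden_def i)
    also have "\<dots> = cnj (pr ns x i) * pr ns x i" using i finite_idx by (simp add: sum.delta')
    finally show "(\<Sum>j\<in>idx ns. Iden ns i j * cnj (pr ns x i) * pr ns x j) = cnj (pr ns x i) * pr ns x i" .
  qed
  also have "\<dots> = of_real (\<Sum>i\<in>idx ns. (cmod (pr ns x i))\<^sup>2)"
    unfolding of_real_sum by (intro sum.cong refl) (subst complex_norm_square, simp add: mult.commute)
  finally show ?thesis .
qed

lemma solid_key:
  assumes G: "G \<in> herm_C ns"
    and close: "\<forall>i\<in>idx ns. \<forall>j\<in>idx ns. cmod (G i j - Iden ns i j) < 1 / (real (card (idx ns)) + 1)"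
  shows "nonneg_c (tinner ns G (rank1 ns x))"
proof -
  define N where "N = real (card (idx ns))"
  define e where "e = 1 / (N + 1)"
  define a where "a i = cmod (pr ns x i)" for i
  define S where "S = (\<Sum>i\<in>idx ns. (a i)\<^sup>2)"
  define D where "D i j = G i j - Iden ns i j" for i j
  have N0: "N \<ge> 0" by (simp add: N_def)
  have e0: "e \<ge> 0" using N0 by (simp add: e_def)
  have eN: "e * N \<le> 1" using N0 by (simp add: e_def field_simps)
  have S0: "S \<ge> 0" by (simp add: S_def sum_nonneg)
  have Dle: "cmod (D i j) \<le> e" if "i \<in> idx ns" "j \<in> idx ns" for i j
    using close that by (auto simp: D_def e_def N_def intro: less_imp_le)
  have split: "Q ns G x = Q ns (Iden ns) x + Q ns D x"
    by (simp add: D_def ring_distribs sum.distrib[symmetric])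
  have "cmod (Q ns D x) \<le> (\<Sum>i\<in>idx ns. \<Sum>j\<in>idx ns. cmod (D i j * cnj (pr ns x i) * pr ns x j))"
    by (rule order.trans[OF norm_sum sum_mono[OF norm_sum]])
  also have "\<dots> \<le> (\<Sum>i\<in>idx ns. \<Sum>j\<in>idx ns. e * (((a i)\<^sup>2 + (a j)\<^sup>2) / 2))"
  proof (intro sum_mono)
    fix i j assume ij: "i \<in> idx ns" "j \<in> idx ns"
    have "cmod (D i j * cnj (pr ns x i) * pr ns x j) = cmod (D i j) * (a i * a j)"
      by (simp add: norm_mult a_def)
    also have "\<dots> \<le> e * (((a i)\<^sup>2 + (a j)\<^sup>2) / 2)"
    proof (rule mult_mono)
      show "cmod (D i j) \<le> e" by (rule Dle[OF ij])
      have "0 \<le> (a i - a j)\<^sup>2" by simp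
      then show "a i * a j \<le> ((a i)\<^sup>2 + (a j)\<^sup>2) / 2" by (simp add: power2_eq_square algebra_simps)
      show "0 \<le> e" by (rule e0)
      show "0 \<le> a i * a j" by (simp add: a_def)
    qed
    finally show "cmod (D i j * cnj (pr ns x i) * pr ns x j) \<le> e * (((a i)\<^sup>2 + (a j)\<^sup>2) / 2)" .
  qed
  also have "\<dots> = e * N * S"
  proof -
    have A: "(\<Sum>i\<in>idx ns. \<Sum>j\<in>idx ns. (a i)\<^sup>2) = N * S"
      by (simp add: S_def N_def sum_distrib_left)
    have B: "(\<Sum>i\<in>idx ns. \<Sum>j\<in>idx ns. (a j)\<^sup>2) = N * S"
      by (simp add: S_def N_def)
    have "(\<Sum>i\<in>idx ns. \<Sum>j\<in>idx ns. e * (((a i)\<^sup>2 + (a j)\<^sup>2) / 2))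
        = (\<Sum>i\<in>idx ns. \<Sum>j\<in>idx ns. e / 2 * (a i)\<^sup>2 + e / 2 * (a j)\<^sup>2)"
      by (intro sum.cong refl) (simp add: field_simps)
    also have "\<dots> = e / 2 * (\<Sum>i\<in>idx ns. \<Sum>j\<in>idx ns. (a i)\<^sup>2) + e / 2 * (\<Sum>i\<in>idx ns. \<Sum>j\<in>idx ns. (a j)\<^sup>2)"
      by (simp add: sum.distrib sum_distrib_left mult.left_commute)
    also have "\<dots> = e * N * S" unfolding A B by simp
    finally show ?thesis .
  qed
  finally have bound: "cmod (Q ns D x) \<le> e * N * S" .
  have "Re (Q ns G x) = S + Re (Q ns D x)"
    unfolding split Q_Iden by (simp add: S_def a_def)
  also have "\<dots> \<ge> S - cmod (Q ns D x)"
    using abs_Re_le_cmod[of "Q ns D x"] by linarith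
  moreover have "S - cmod (Q ns D x) \<ge> S - e * N * S" using bound by linarith
  moreover have "S - e * N * S \<ge> 0"
  proof -
    have "S - e * N * S = S * (1 - e * N)" by (simp add: algebra_simps)
    moreover have "S * (1 - e * N) \<ge> 0" using eN S0 by simp
    ultimately show ?thesis by simp
  qed
  ultimately have "Re (Q ns G x) \<ge> 0" by linarith
  moreover have "Im (Q ns G x) = 0" by (rule Q_real[OF G])
  ultimately show ?thesis by (simp add: nonneg_c_def tinner_rank1)
qed



lemma solid_C: "solid_cone ns (herm_C ns) (PSD_C ns)"
  unfolding solid_cone_def
proof (intro bexI exI conjI ballI impI)
  show "(1::real) / (real (card (idx ns)) + 1) > 0" by simp
  fix G assume "G \<in> herm_C ns"
    "\<forall>i\<in>idx ns. \<forall>j\<in>idx ns. cmod (G i j - Iden ns i j) < 1 / (real (card (idx ns)) + 1)"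
  then show "G \<in> PSD_C ns" using solid_key by (simp add: PSD_C_def)
next
  have I: "Iden ns \<in> herm_C ns" using Iden_herm_R herm_R_sub by blast
  then show "Iden ns \<in> PSD_C ns"
    using solid_key[OF I] by (simp add: PSD_C_def)
qed

lemma solid_R: "solid_cone ns (herm_R ns) (PSD_R ns)"
  unfolding solid_cone_def
proof (intro bexI exI conjI ballI impI)
  show "(1::real) / (real (card (idx ns)) + 1) > 0" by simp
  fix G assume G: "G \<in> herm_R ns"
    "\<forall>i\<in>idx ns. \<forall>j\<in>idx ns. cmod (G i j - Iden ns i j) < 1 / (real (card (idx ns)) + 1)"
  have "G \<in> herm_C ns" using G herm_R_sub by blast
  then show "G \<in> PSD_R ns" using solid_key G by (simp add: PSD_R_def)
next
  have I: "Iden ns \<in> herm_C ns" using Iden_herm_R herm_R_sub by blast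
  then show "Iden ns \<in> PSD_R ns"
    using solid_key[OF I] Iden_herm_R by (simp add: PSD_R_def)
qed

lemma pointed_C: "pointed_cone (PSD_C ns)"
  unfolding pointed_cone_def
proof
  assume "\<exists>H. H \<noteq> (\<lambda>i j. 0) \<and> (\<forall>t::real. (\<lambda>i j. of_real t * H i j) \<in> PSD_C ns)"
  then obtain H where H0: "H \<noteq> (\<lambda>i j. 0)" and Ht: "\<And>t::real. (\<lambda>i j. of_real t * H i j) \<in> PSD_C ns"
    by blast
  have "(\<lambda>i j. of_real 1 * H i j) \<in> PSD_C ns" by (rule Ht)
  then have H: "H \<in> PSD_C ns" by simp
  have Hm: "(\<lambda>i j. of_real (-1) * H i j) \<in> PSD_C ns" by (rule Ht)
  have "Q ns H x = 0" for x
  proof -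
    have "nonneg_c (tinner ns H (rank1 ns x))" using H by (simp add: PSD_C_def)
    moreover have "nonneg_c (tinner ns (\<lambda>i j. of_real (-1) * H i j) (rank1 ns x))"
      using Hm by (simp add: PSD_C_def)
    then have "nonneg_c (- tinner ns H (rank1 ns x))"
      unfolding tinner_scale by simp
    ultimately have "tinner ns H (rank1 ns x) = 0"
      by (simp add: nonneg_c_def complex_eq_iff)
    then show ?thesis by (simp add: tinner_rank1)
  qed
  then have z: "H i j = 0" if "i \<in> idx ns" "j \<in> idx ns" for i j
    using zero_form that by blast
  have hc: "H \<in> herm_C ns" using H by (simp add: PSD_C_def)
  have "H = (\<lambda>i j. 0)"
  proof (intro ext)
    fix i j show "H i j = 0"
      using z hc unfolding herm_C_iff by blast
  qed
  with H0 show False by blast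
qed

lemma sum_delta2:
  assumes "p \<in> idx ns" "q \<in> idx ns"
  shows "(\<Sum>i\<in>idx ns. \<Sum>j\<in>idx ns. (if i = p \<and> j = q then 1 else 0) * F i j) = (F p q :: complex)"
proof -
  have "(\<Sum>i\<in>idx ns. \<Sum>j\<in>idx ns. (if i = p \<and> j = q then 1 else 0) * F i j)
     = (\<Sum>i\<in>idx ns. if i = p then F p q else 0)"
  proof (rule sum.cong[OF refl])
    fix i assume i: "i \<in> idx ns"
    have "(\<Sum>j\<in>idx ns. (if i = p \<and> j = q then 1 else 0) * F i j)
        = (\<Sum>j\<in>idx ns. if j = q then (if i = p then F p q else 0) else 0)"
      by (rule sum.cong) auto
    also have "\<dots> = (if i = p then F p q else 0)" using assms finite_idx by (simp add: sum.delta)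
    finally show "(\<Sum>j\<in>idx ns. (if i = p \<and> j = q then 1 else 0) * F i j) = (if i = p then F p q else 0)" .
  qed
  also have "\<dots> = F p q" using assms finite_idx by (simp add: sum.delta)
  finally show ?thesis .
qed



definition dl :: "nat list \<Rightarrow> nat list \<Rightarrow> tensor" where
  "dl p q = (\<lambda>i j. if i = p \<and> j = q then 1 else 0)"

definition Hx :: "nat list \<Rightarrow> nat list \<Rightarrow> nat list \<Rightarrow> nat list \<Rightarrow> tensor" where
  "Hx a b c d = (\<lambda>i j. dl a b i j + dl b a i j - dl c d i j - dl d c i j)"

lemma dl_out: "p \<in> idx ns \<Longrightarrow> q \<in> idx ns \<Longrightarrow> i \<notin> idx ns \<or> j \<notin> idx ns \<Longrightarrow> dl p q i j = 0"
  unfolding dl_def by auto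

lemma dl_swap: "cnj (dl p q i j) = dl q p j i"
  unfolding dl_def by auto

lemma dl_real: "dl p q i j \<in> \<real>"
  unfolding dl_def by auto

lemma Hx_herm:
  assumes "a \<in> idx ns" "b \<in> idx ns" "c \<in> idx ns" "d \<in> idx ns"
  shows "Hx a b c d \<in> herm_R ns"
  unfolding herm_R_def herm_C_iff mem_Collect_eq
proof (intro conjI allI impI)
  fix i j assume out: "i \<notin> idx ns \<or> j \<notin> idx ns"
  show "Hx a b c d i j = 0" unfolding Hx_def using dl_out[OF _ _ out] assms by simp
next
  fix i j show "cnj (Hx a b c d i j) = Hx a b c d j i" unfolding Hx_def by (simp add: dl_swap)
next
  fix i j show "Hx a b c d i j \<in> \<real>" unfolding Hx_def by (intro Reals_add Reals_diff dl_real)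
qed

lemma Q_Hx:
  assumes "a \<in> idx ns" "b \<in> idx ns" "c \<in> idx ns" "d \<in> idx ns"
  shows "Q ns (Hx a b c d) x = cnj (pr ns x a) * pr ns x b + cnj (pr ns x b) * pr ns x a
     - cnj (pr ns x c) * pr ns x d - cnj (pr ns x d) * pr ns x c"
proof -
  define F where "F i j = cnj (pr ns x i) * pr ns x j" for i j
  have "Q ns (Hx a b c d) x = (\<Sum>i\<in>idx ns. \<Sum>j\<in>idx ns. dl a b i j * F i j + dl b a i j * F i j
         - dl c d i j * F i j - dl d c i j * F i j)"
    unfolding Hx_def F_def by (intro sum.cong refl) (simp add: algebra_simps)
  also have "\<dots> = (\<Sum>i\<in>idx ns. \<Sum>j\<in>idx ns. dl a b i j * F i j) + (\<Sum>i\<in>idx ns. \<Sum>j\<in>idx ns. dl b a i j * F i j)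
     - (\<Sum>i\<in>idx ns. \<Sum>j\<in>idx ns. dl c d i j * F i j) - (\<Sum>i\<in>idx ns. \<Sum>j\<in>idx ns. dl d c i j * F i j)"
    by (simp only: sum.distrib sum_subtractf)
  also have "\<dots> = F a b + F b a - F c d - F d c"
    unfolding dl_def using assms by (simp only: sum_delta2)
  finally show ?thesis by (simp add: F_def)
qed

lemma pr_real_cnj: "\<forall>k l. x k l \<in> \<real> \<Longrightarrow> cnj (pr ns x i) = pr ns x i"
proof -
  assume r: "\<forall>k l. x k l \<in> \<real>"
  have "cnj (x k l) = x k l" for k l using r Reals_cnj_iff by blast
  then show ?thesis unfolding pr_def by simp
qed

lemma not_pointed_R:
  assumes m: "length ns > 1" and nk: "\<forall>k<length ns. ns ! k > 1"
  shows "\<not> pointed_cone (PSD_R ns)"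
proof -
  define m where "m = length ns"
  define c where "c = replicate m (0::nat)"
  define a where "a = c[1 := 1]"
  define b where "b = c[0 := 1]"
  define d where "d = c[0 := 1, 1 := 1]"
  have m2: "m > 1" using m by (simp add: m_def)
  have a_nth: "k < m \<Longrightarrow> a ! k = (if k = 1 then 1 else 0)" for k
    by (simp add: a_def c_def nth_list_update)
  have b_nth: "k < m \<Longrightarrow> b ! k = (if k = 0 then 1 else 0)" for k
    by (simp add: b_def c_def nth_list_update)
  have c_nth: "k < m \<Longrightarrow> c ! k = 0" for k
    by (simp add: c_def)
  have d_nth: "k < m \<Longrightarrow> d ! k = (if k = 0 \<or> k = 1 then 1 else 0)" for k
    by (simp add: d_def c_def nth_list_update)
  have len: "length a = m" "length b = m" "length c = m" "length d = m"
    by (simp_all add: a_def b_def c_def d_def)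
  have nk': "k < m \<Longrightarrow> 1 < ns ! k" for k using nk by (simp add: m_def)
  have mem: "l \<in> idx ns" if "length l = m" "\<And>k. k < m \<Longrightarrow> l ! k \<le> 1" for l
    unfolding idx_def using that nk' by (auto simp: m_def intro: le_less_trans)
  have ia: "a \<in> idx ns" by (rule mem) (simp_all add: len a_nth)
  have ib: "b \<in> idx ns" by (rule mem) (simp_all add: len b_nth)
  have ic: "c \<in> idx ns" by (rule mem) (simp_all add: len c_nth)
  have idd: "d \<in> idx ns" by (rule mem) (simp_all add: len d_nth)
  have v: "a ! 0 = 0" "b ! 0 = 1" "c ! 0 = 0" "d ! 0 = 1" "a ! 1 = 1" "c ! 1 = 0" "b ! 1 = 0" "d ! 1 = 1"
    using m2 a_nth b_nth c_nth d_nth by auto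
  have ne: "a \<noteq> b" "a \<noteq> c" "a \<noteq> d" "b \<noteq> c" "b \<noteq> d" "c \<noteq> d"
    using v by auto
  define H where "H = Hx a b c d"
  have "H a b = 1" using ne unfolding H_def Hx_def dl_def by simp
  then have H0: "H \<noteq> (\<lambda>i j. 0)" by auto
  have HR: "H \<in> herm_R ns" unfolding H_def by (rule Hx_herm[OF ia ib ic idd])
  have Q0: "Q ns H x = 0" if xr: "\<forall>k l. x k l \<in> \<real>" for x
  proof -
    have eq: "pr ns x a * pr ns x b = pr ns x c * pr ns x d"
    proof -
      have "pr ns x a * pr ns x b = (\<Prod>k<m. x k (a ! k) * x k (b ! k))"
        by (simp add: pr_def m_def prod.distrib)
      also have "\<dots> = (\<Prod>k<m. x k (c ! k) * x k (d ! k))"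
      proof (rule prod.cong[OF refl])
        fix k assume "k \<in> {..<m}"
        then have k: "k < m" by simp
        show "x k (a ! k) * x k (b ! k) = x k (c ! k) * x k (d ! k)"
          using k by (cases "k = 0"; cases "k = 1") (simp_all add: a_nth b_nth c_nth d_nth mult.commute)
      qed
      also have "\<dots> = pr ns x c * pr ns x d"
        by (simp add: pr_def m_def prod.distrib)
      finally show ?thesis .
    qed
    have "Q ns H x = pr ns x a * pr ns x b + pr ns x b * pr ns x a
       - pr ns x c * pr ns x d - pr ns x d * pr ns x c"
      unfolding H_def Q_Hx[OF ia ib ic idd] by (simp only: pr_real_cnj[OF xr])
    also have "\<dots> = 0" using eq by (simp add: mult.commute)
    finally show ?thesis .
  qed
  have "\<forall>t::real. (\<lambda>i j. of_real t * H i j) \<in> PSD_R ns"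
  proof
    fix t :: real
    have "(\<lambda>i j. of_real t * H i j) \<in> herm_R ns" by (rule herm_R_scale[OF HR])
    moreover have "nonneg_c (tinner ns (\<lambda>i j. of_real t * H i j) (rank1 ns x))"
      if "\<forall>k l. x k l \<in> \<real>" for x
      unfolding tinner_scale tinner_rank1 using Q0[OF that] by (simp add: nonneg_c_def)
    ultimately show "(\<lambda>i j. of_real t * H i j) \<in> PSD_R ns" by (simp add: PSD_R_def)
  qed
  with H0 show ?thesis unfolding pointed_cone_def by blast
qed

theorem proposition5p4:
  fixes ns :: "nat list"
  assumes "length ns > 1"
    and "\<forall>k<length ns. ns ! k > 1"
  shows "proper_cone ns (herm_C ns) (PSD_C ns)
       \<and> closed_convex_cone ns (herm_R ns) (PSD_R ns)
       \<and> solid_cone ns (herm_R ns) (PSD_R ns)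
       \<and> \<not> pointed_cone (PSD_R ns)"
  using ccc_C solid_C pointed_C ccc_R solid_R not_pointed_R[OF assms]
  by (simp add: proper_cone_def)

end
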